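(* Let $B\in\mathscr B$, let $\mathsf T_B:=\{\gamma\in\Gamma_B:\ \gamma(t)=\gamma(0)+\int_0^t b(\gamma(\tau))\,d\tau\ \forall t\in[0,T],\ \gamma(0)\notin B,\ \gamma(T)\notin B\}$, let $\eta_B:=\eta\llcorner\mathsf T_B$, let $\rho_B$ be defined by $\rho_B(t,\cdot)\mathscr L^2=(e_t)_\#\eta_B$ for $t\in[0,T]$, and set $r_B(x):=\int_0^T\rho_B(t,x)\,dt$ for $x\in B$. Then $\mathrm{div}(r_Bb)=0$ in $\mathscr D'(B)$.
   Context: $T>0$, $\mathbb T^2=\mathbb R^2/\mathbb Z^2$, $b\colon\mathbb T^2\to\mathbb R^2$ is a bounded, everywhere defined Borel vector field with $b\in\mathrm{BV}(\mathbb T^2)$, nearly incompressible with density $\rho$ (i.e. $\ln\rho\in L^\infty((0,T)\times\mathbb T^2)$ and $\partial_t\rho+\mathrm{div}(\rho b)=0$ in $\mathscr D'((0,T)\times\mathbb T^2)$). $\Gamma:=C([0,T];\mathbb T^2)$, $e_t(\gamma):=\gamma(t)$. $\eta$ is a positive finite Borel measure on $\Gamma$, concentrated on curves satisfying $\gamma(t)=\gamma(0)+\int_0^tb(\gamma(\tau))d\tau$, such that $(e_t)_\#\eta=\rho(t,\cdot)\mathscr L^2$ for every $t$ (such $\eta$ exists by Ambrosio's superposition principle). $\mathscr B:=\{B(x,r): x\in\mathbb Q^2, r\in\mathbb Q^+\}$. For a set $A\subset\mathbb T^2$, $\Gamma_A:=\{\gamma\in\Gamma:\ \mathscr L^1(\{t\in[0,T]:\gamma(t)\in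 A\})>0\}$. *)

theory Defs
  imports "HOL-Analysis.Analysis"
begin

text \<open>The flat torus is represented through the plane: functions on the torus are
  Z^2-periodic functions on real x real, the torus itself is identified with the
  fundamental domain unit_cell via the projection torus_proj.\<close>

definition Z2 :: "(real \<times> real) set" where
  "Z2 = {(real_of_int m, real_of_int n) | m n. True}"

definition periodic2 :: "(real \<times> real \<Rightarrow> 'b) \<Rightarrow> bool" where
  "periodic2 f \<longleftrightarrow> (\<forall>x. \<forall>k\<in>Z2. f (x + k) = f x)"

definition unit_cell :: "(real \<times> real) set" where
  "unit_cell = {0..<1} \<times> {0..<1}"

definition torus_proj :: "real \<times> real \<Rightarrow> real \<times> real" where
  "torus_proj x = (frac (fst x), frac (snd x))"

text \<open>Preimage in the plane of the open torus ball B(c,r).\<close>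
definition torus_ball :: "real \<times> real \<Rightarrow> real \<Rightarrow> (real \<times> real) set" where
  "torus_ball c r = {y. \<exists>k\<in>Z2. dist y (c + k) < r}"

definition tsupport :: "('a::topological_space \<Rightarrow> 'b::zero) \<Rightarrow> 'a set" where
  "tsupport f = closure {x. f x \<noteq> 0}"

fun dderiv :: "'a::real_normed_vector list \<Rightarrow> ('a \<Rightarrow> 'b::real_normed_vector) \<Rightarrow> 'a \<Rightarrow> 'b" where
  "dderiv [] f = f"
| "dderiv (v # vs) f = (\<lambda>x. frechet_derivative (dderiv vs f) (at x) v)"

definition smooth :: "('a::real_normed_vector \<Rightarrow> 'b::real_normed_vector) \<Rightarrow> bool" where
  "smooth f \<longleftrightarrow> (\<forall>vs. (\<forall>x. dderiv vs f differentiable (at x)) \<and> continuous_on UNIV (dderiv vs f))"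

definition divergence :: "(real \<times> real \<Rightarrow> real \<times> real) \<Rightarrow> real \<times> real \<Rightarrow> real" where
  "divergence \<phi> x = (\<Sum>e\<in>Basis. frechet_derivative \<phi> (at x) e \<bullet> e)"

definition torus_BV :: "(real \<times> real \<Rightarrow> real \<times> real) \<Rightarrow> bool" where
  "torus_BV b \<longleftrightarrow> (\<exists>C. \<forall>\<phi>. smooth \<phi> \<and> periodic2 \<phi> \<and> (\<forall>x. norm (\<phi> x) \<le> 1) \<longrightarrow>
      (\<forall>e\<in>Basis. \<bar>LINT x:unit_cell|lborel. (b x \<bullet> e) * divergence \<phi> x\<bar> \<le> C))"

definition spacetime_test :: "real \<Rightarrow> (real \<times> (real \<times> real) \<Rightarrow> real) \<Rightarrow> bool" where
  "spacetime_test T \<phi> \<longleftrightarrow> smooth \<phi> \<and> (\<forall>t x. \<forall>k\<in>Z2. \<phi> (t, x + k) = \<phi> (t, x)) \<and>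
     (\<exists>a c. 0 < a \<and> c < T \<and> (\<forall>t x. \<phi> (t, x) \<noteq> 0 \<longrightarrow> a \<le> t \<and> t \<le> c))"

text \<open>Nearly incompressible with density rho (rho represented on the fundamental domain).\<close>
definition nearly_incompressible ::
  "real \<Rightarrow> (real \<times> real \<Rightarrow> real \<times> real) \<Rightarrow> (real \<Rightarrow> real \<times> real \<Rightarrow> real) \<Rightarrow> bool" where
  "nearly_incompressible T b \<rho> \<longleftrightarrow>
     (\<lambda>tx. \<rho> (fst tx) (snd tx)) \<in> borel_measurable borel \<and>
     (\<exists>C. AE tx in lborel. tx \<in> {0<..<T} \<times> unit_cell \<longrightarrow>
          \<rho> (fst tx) (snd tx) > 0 \<and> \<bar>ln (\<rho> (fst tx) (snd tx))\<bar> \<le> C) \<and>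
     (\<forall>\<phi>. spacetime_test T \<phi> \<longrightarrow>
        (LINT tx:({0<..<T} \<times> unit_cell)|lborel.
            \<rho> (fst tx) (snd tx) * frechet_derivative \<phi> (at tx) (1, b (snd tx))) = 0)"

text \<open>Path space: (lifts of) continuous curves on [0,T], with the Borel sigma-algebra
  (= trace of the cylinder sigma-algebra).\<close>
definition curve_space :: "real \<Rightarrow> (real \<Rightarrow> real \<times> real) measure" where
  "curve_space T = restrict_space (PiM {0..T} (\<lambda>_. lborel)) {\<gamma>. continuous_on {0..T} \<gamma>}"

definition integral_curve :: "(real \<times> real \<Rightarrow> real \<times> real) \<Rightarrow> real \<Rightarrow> (real \<Rightarrow> real \<times> real) \<Rightarrow> bool" where
  "integral_curve b T \<gamma> \<longleftrightarrow> (\<forall>t\<in>{0..T}. ((\<lambda>\<tau>. b (\<gamma> \<tau>)) has_integral (\<gamma> t - \<gamma> 0)) {0..t})"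

definition Gamma_set :: "real \<Rightarrow> (real \<times> real) set \<Rightarrow> (real \<Rightarrow> real \<times> real) set" where
  "Gamma_set T A = {\<gamma>. emeasure lborel {t\<in>{0..T}. \<gamma> t \<in> A} > 0}"

definition crossing_set ::
  "(real \<times> real \<Rightarrow> real \<times> real) \<Rightarrow> real \<Rightarrow> (real \<times> real) set \<Rightarrow> (real \<Rightarrow> real \<times> real) set" where
  "crossing_set b T B = {\<gamma> \<in> Gamma_set T B. integral_curve b T \<gamma> \<and> \<gamma> 0 \<notin> B \<and> \<gamma> T \<notin> B}"

end

theory Submission
  imports Defs
begin


lemma abs_fst_le: "\<bar>fst (v::real\<times>real)\<bar> \<le> norm v"
  by (metis norm_fst_le prod.collapse real_norm_def)
lemma abs_snd_le: "\<bar>snd (v::real\<times>real)\<bar> \<le> norm v"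
  by (metis norm_snd_le prod.collapse real_norm_def)

lemma chain_rule_curve:
  fixes \<phi> :: "real \<times> real \<Rightarrow> real" and \<gamma> g :: "real \<Rightarrow> real \<times> real"
    and D1 D2 :: "real \<times> real \<Rightarrow> real"
  assumes deriv: "\<And>x. (\<phi> has_derivative (\<lambda>v. fst v * D1 x + snd v * D2 x)) (at x)"
    and c1: "continuous_on UNIV D1" and c2: "continuous_on UNIV D2"
    and curve: "\<And>t. t \<in> {0..T} \<Longrightarrow> (g has_integral (\<gamma> t - \<gamma> 0)) {0..t}"
    and bound: "\<And>\<tau>. norm (g \<tau>) \<le> K"
    and integ: "(\<lambda>\<tau>. fst (g \<tau>) * D1 (\<gamma> \<tau>) + snd (g \<tau>) * D2 (\<gamma> \<tau>)) integrable_on {0..T}"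
    and T: "0 \<le> T"
  shows "((\<lambda>\<tau>. fst (g \<tau>) * D1 (\<gamma> \<tau>) + snd (g \<tau>) * D2 (\<gamma> \<tau>)) has_integral (\<phi> (\<gamma> T) - \<phi> (\<gamma> 0))) {0..T}"
proof -
  define G where "G \<tau> = fst (g \<tau>) * D1 (\<gamma> \<tau>) + snd (g \<tau>) * D2 (\<gamma> \<tau>)" for \<tau>
  have K0: "0 \<le> K" using bound[of 0] norm_ge_zero order_trans by blast
  have gint: "g integrable_on {0..T}" using curve[of T] T by auto
  have Gint: "G integrable_on {0..T}" using integ unfolding G_def .
  have gam_diff: "integral {s..t} g = \<gamma> t - \<gamma> s" if "0 \<le> s" "s \<le> t" "t \<le> T" for s t
  proof -
    have i1: "integral {0..t} g = \<gamma> t - \<gamma> 0" using curve[of t] that by (simp add: integral_unique)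
    have i2: "integral {0..s} g = \<gamma> s - \<gamma> 0" using curve[of s] that by (simp add: integral_unique)
    have "g integrable_on {0..t}" using integrable_subinterval_real[OF gint, of 0 t] that by auto
    from Henstock_Kurzweil_Integration.integral_combine[OF that(1,2) this] i1 i2 show ?thesis by (simp add: algebra_simps)
  qed
  have gint_sub: "g integrable_on {s..t}" if "0 \<le> s" "t \<le> T" for s t
    using integrable_subinterval_real[OF gint, of s t] that by auto
  have Gint_sub: "G integrable_on {s..t}" if "0 \<le> s" "t \<le> T" for s t
    using integrable_subinterval_real[OF Gint, of s t] that by auto
  have lip: "norm (\<gamma> t - \<gamma> s) \<le> K * (t - s)" if "0 \<le> s" "s \<le> t" "t \<le> T" for s t
  proof -
    have "(g has_integral (\<gamma> t - \<gamma> s)) {s..t}"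
      using gam_diff[OF that] gint_sub[of s t] that by (metis has_integral_integral)
    from has_integral_bound_real[OF K0 finite.emptyI this] bound that show ?thesis by simp
  qed
  define R where "R = norm (\<gamma> 0) + K * T"
  have inC: "\<gamma> \<tau> \<in> cball 0 R" if "\<tau> \<in> {0..T}" for \<tau>
  proof -
    have "norm (\<gamma> \<tau>) \<le> norm (\<gamma> 0) + norm (\<gamma> \<tau> - \<gamma> 0)" by (metis norm_triangle_sub)
    also have "\<dots> \<le> norm (\<gamma> 0) + K * \<tau>" using lip[of 0 \<tau>] that by auto
    also have "\<dots> \<le> R" unfolding R_def using that K0 by (auto intro: mult_left_mono)
    finally show ?thesis by simp
  qed
  have uc1: "uniformly_continuous_on (cball 0 R) D1"
    by (rule compact_uniformly_continuous) (auto intro: continuous_on_subset[OF c1])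
  have uc2: "uniformly_continuous_on (cball 0 R) D2"
    by (rule compact_uniformly_continuous) (auto intro: continuous_on_subset[OF c2])
  define H where "H t = \<phi> (\<gamma> t) - integral {0..t} G" for t
  have key: "\<exists>\<delta>>0. \<forall>s t. 0 \<le> s \<and> s \<le> t \<and> t \<le> T \<and> t - s < \<delta> \<longrightarrow> \<bar>H t - H s\<bar> \<le> \<epsilon> * (t - s)"
    if "\<epsilon> > 0" for \<epsilon>
  proof -
    define e where "e = \<epsilon> / (4 * K + 1)"
    have e0: "e > 0" using that K0 unfolding e_def by auto
    obtain d1 where d1: "d1 > 0" "\<And>x x'. x \<in> cball 0 R \<Longrightarrow> x' \<in> cball 0 R \<Longrightarrow> dist x' x < d1 \<Longrightarrow> dist (D1 x') (D1 x) < e"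
      using uc1 e0 unfolding uniformly_continuous_on_def by metis
    obtain d2 where d2: "d2 > 0" "\<And>x x'. x \<in> cball 0 R \<Longrightarrow> x' \<in> cball 0 R \<Longrightarrow> dist x' x < d2 \<Longrightarrow> dist (D2 x') (D2 x) < e"
      using uc2 e0 unfolding uniformly_continuous_on_def by metis
    define d where "d = min d1 d2"
    have d0: "d > 0" using d1 d2 by (simp add: d_def)
    define \<delta> where "\<delta> = d / (K + 1)"
    have \<delta>0: "\<delta> > 0" using d0 K0 by (simp add: \<delta>_def)
    have Kd: "K * \<delta> < d" using d0 K0 unfolding \<delta>_def by (simp add: field_simps)
    have close: "\<bar>D1 x - D1 x0\<bar> < e \<and> \<bar>D2 x - D2 x0\<bar> < e"
      if "x \<in> cball 0 R" "x0 \<in> cball 0 R" "norm (x - x0) < d" for x x0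
      using d1(2)[OF that(2,1)] d2(2)[OF that(2,1)] that(3) by (auto simp: dist_norm d_def)
    show ?thesis
    proof (intro exI[of _ \<delta>] conjI allI impI \<delta>0)
      fix s t assume st: "0 \<le> s \<and> s \<le> t \<and> t \<le> T \<and> t - s < \<delta>"
      hence s0: "0 \<le> s" and st1: "s \<le> t" and tT: "t \<le> T" and small: "t - s < \<delta>" by auto
      define x0 where "x0 = \<gamma> s"
      define \<Delta> where "\<Delta> = \<gamma> t - \<gamma> s"
      have x0C: "x0 \<in> cball 0 R" using inC[of s] st unfolding x0_def by auto
      have tC: "\<gamma> t \<in> cball 0 R" using inC[of t] st by auto
      have \<Delta>b: "norm \<Delta> \<le> K * (t - s)" using lip[OF s0 st1 tT] unfolding \<Delta>_def .
      have Ksmall: "K * (t - s) < d"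
        using Kd small K0 by (smt (verit) mult_left_mono)
      define L where "L v = fst v * D1 x0 + snd v * D2 x0" for v :: "real \<times> real"
      define S where "S = cball 0 R \<inter> cball x0 (K * (t - s))"
      have i: "norm (\<phi> (\<gamma> t) - \<phi> (\<gamma> s) - L \<Delta>) \<le> norm \<Delta> * (2 * e)"
      proof -
        have "norm (\<phi> (x0 + \<Delta>) - \<phi> x0 - (\<lambda>v. fst v * D1 x0 + snd v * D2 x0) (x0 + \<Delta> - x0)) \<le> norm (x0 + \<Delta> - x0) * (2 * e)"
        proof (rule differentiable_bound_linearization[where S=S])
          fix \<theta> :: real assume th: "\<theta> \<in> {0..1}"
          have "norm (x0 + \<theta> *\<^sub>R (x0 + \<Delta> - x0)) = norm ((1 - \<theta>) *\<^sub>R x0 + \<theta> *\<^sub>R \<gamma> t)"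
            unfolding \<Delta>_def x0_def by (simp add: algebra_simps)
          also have "\<dots> \<le> (1 - \<theta>) * norm x0 + \<theta> * norm (\<gamma> t)"
            using th by (smt (verit) atLeastAtMost_iff norm_scaleR norm_triangle_ineq)
          also have "\<dots> \<le> (1 - \<theta>) * R + \<theta> * R"
            using th x0C tC by (intro add_mono mult_left_mono) auto
          finally have a: "x0 + \<theta> *\<^sub>R (x0 + \<Delta> - x0) \<in> cball 0 R" by (simp add: algebra_simps)
          have "norm (x0 + \<theta> *\<^sub>R (x0 + \<Delta> - x0) - x0) = \<theta> * norm \<Delta>" using th by simp
          also have "\<dots> \<le> norm \<Delta>" using th by (simp add: mult_left_le_one_le)
          finally have "x0 + \<theta> *\<^sub>R (x0 + \<Delta> - x0) \<in> cball x0 (K * (t - s))"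
            using \<Delta>b by (simp add: dist_norm norm_minus_commute)
          with a show "x0 + \<theta> *\<^sub>R (x0 + \<Delta> - x0) \<in> S" unfolding S_def by auto
        next
          fix x assume "x \<in> S"
          show "(\<phi> has_derivative (\<lambda>v. fst v * D1 x + snd v * D2 x)) (at x within S)"
            using deriv has_derivative_at_withinI by blast
        next
          fix x assume xS: "x \<in> S"
          hence "norm (x - x0) < d" using Ksmall unfolding S_def by (auto simp: dist_norm norm_minus_commute)
          hence cl: "\<bar>D1 x - D1 x0\<bar> < e \<and> \<bar>D2 x - D2 x0\<bar> < e" using close xS x0C unfolding S_def by auto
          show "onorm ((\<lambda>v. fst v * D1 x + snd v * D2 x) - (\<lambda>v. fst v * D1 x0 + snd v * D2 x0)) \<le> 2 * e"
          proof (rule onorm_le)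
            fix v :: "real \<times> real"
            have "norm (((\<lambda>v. fst v * D1 x + snd v * D2 x) - (\<lambda>v. fst v * D1 x0 + snd v * D2 x0)) v)
                = \<bar>fst v * (D1 x - D1 x0) + snd v * (D2 x - D2 x0)\<bar>" by (simp add: algebra_simps)
            also have "\<dots> \<le> \<bar>fst v\<bar> * \<bar>D1 x - D1 x0\<bar> + \<bar>snd v\<bar> * \<bar>D2 x - D2 x0\<bar>"
              by (metis abs_mult abs_triangle_ineq)
            also have "\<dots> \<le> norm v * e + norm v * e"
              using cl by (intro add_mono mult_mono) (auto simp: abs_fst_le abs_snd_le)
            finally show "norm (((\<lambda>v. fst v * D1 x + snd v * D2 x) - (\<lambda>v. fst v * D1 x0 + snd v * D2 x0)) v) \<le> 2 * e * norm v"
              by simp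
          qed
        next
          show "x0 \<in> S" unfolding S_def using x0C K0 st by auto
        qed
        thus ?thesis unfolding \<Delta>_def x0_def L_def by simp
      qed
      have Lbl: "bounded_linear L" unfolding L_def
        by (auto intro!: bounded_linear_intros)
      have ii: "integral {s..t} (\<lambda>\<tau>. L (g \<tau>)) = L \<Delta>"
        using integral_linear[OF gint_sub[OF s0 tT] Lbl] gam_diff[OF s0 st1 tT]
        unfolding \<Delta>_def by (simp add: o_def)
      have LGint: "(\<lambda>\<tau>. L (g \<tau>)) integrable_on {s..t}"
        using integrable_linear[OF gint_sub[OF s0 tT] Lbl] by (simp add: o_def)
      have Gst: "integral {0..t} G - integral {0..s} G = integral {s..t} G"
        using Henstock_Kurzweil_Integration.integral_combine[OF s0 st1 Gint_sub[of 0 t]] s0 tT by (simp add: algebra_simps)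
      have HH: "H t - H s = (\<phi> (\<gamma> t) - \<phi> (\<gamma> s) - L \<Delta>) + integral {s..t} (\<lambda>\<tau>. L (g \<tau>) - G \<tau>)"
        unfolding H_def using Gst ii integral_diff[OF LGint Gint_sub[OF s0 tT]] by simp
      have iii: "norm (integral {s..t} (\<lambda>\<tau>. L (g \<tau>) - G \<tau>)) \<le> (2 * K * e) * Henstock_Kurzweil_Integration.content {s..t}"
      proof (rule has_integral_bound_real[OF _ finite.emptyI])
        show "0 \<le> 2 * K * e" using K0 e0 by simp
        show "((\<lambda>\<tau>. L (g \<tau>) - G \<tau>) has_integral integral {s..t} (\<lambda>\<tau>. L (g \<tau>) - G \<tau>)) {s..t}"
          using integrable_diff[OF LGint Gint_sub[OF s0 tT]] by (simp add: has_integral_integral)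
        fix \<tau> assume "\<tau> \<in> {s..t} - {}"
        hence tau: "s \<le> \<tau>" "\<tau> \<le> t" by auto
        have "norm (\<gamma> \<tau> - \<gamma> s) \<le> K * (\<tau> - s)" using lip[of s \<tau>] tau s0 tT by auto
        also have "\<dots> \<le> K * (t - s)" using tau K0 by (simp add: mult_left_mono)
        finally have "norm (\<gamma> \<tau> - x0) < d" using Ksmall unfolding x0_def by simp
        hence cl: "\<bar>D1 (\<gamma> \<tau>) - D1 x0\<bar> < e \<and> \<bar>D2 (\<gamma> \<tau>) - D2 x0\<bar> < e"
          using close[of "\<gamma> \<tau>" x0] x0C inC[of \<tau>] tau s0 tT by auto
        have gb: "\<bar>fst (g \<tau>)\<bar> \<le> K" "\<bar>snd (g \<tau>)\<bar> \<le> K"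
          using bound[of \<tau>] abs_fst_le[of "g \<tau>"] abs_snd_le[of "g \<tau>"] by linarith+
        have "norm (L (g \<tau>) - G \<tau>) = \<bar>fst (g \<tau>) * (D1 x0 - D1 (\<gamma> \<tau>)) + snd (g \<tau>) * (D2 x0 - D2 (\<gamma> \<tau>))\<bar>"
          unfolding L_def G_def by (simp add: algebra_simps)
        also have "\<dots> \<le> \<bar>fst (g \<tau>)\<bar> * \<bar>D1 x0 - D1 (\<gamma> \<tau>)\<bar> + \<bar>snd (g \<tau>)\<bar> * \<bar>D2 x0 - D2 (\<gamma> \<tau>)\<bar>"
          by (metis abs_mult abs_triangle_ineq)
        also have "\<dots> \<le> K * e + K * e"
          using cl gb by (intro add_mono mult_mono) auto
        finally show "norm (L (g \<tau>) - G \<tau>) \<le> 2 * K * e" by simp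
      qed
      have "\<bar>H t - H s\<bar> \<le> norm \<Delta> * (2 * e) + (2 * K * e) * (t - s)"
        using HH i iii st1 by (smt (verit) content_real real_norm_def norm_triangle_ineq)
      also have "\<dots> \<le> K * (t - s) * (2 * e) + (2 * K * e) * (t - s)"
        using \<Delta>b e0 by (simp add: mult_right_mono)
      also have "\<dots> = (4 * K * e) * (t - s)" by (simp add: algebra_simps)
      also have "\<dots> \<le> \<epsilon> * (t - s)"
      proof (rule mult_right_mono)
        show "4 * K * e \<le> \<epsilon>" unfolding e_def using K0 that by (simp add: field_simps)
      qed (use st1 in simp)
      finally show "\<bar>H t - H s\<bar> \<le> \<epsilon> * (t - s)" .
    qed
  qed
  have tel: "\<bar>H T - H 0\<bar> \<le> \<epsilon> * T" if e: "\<epsilon> > 0" for \<epsilon>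
  proof (cases "T = 0")
    case True thus ?thesis by simp
  next
    case False
    hence T0: "T > 0" using T by simp
    obtain \<delta> where \<delta>: "\<delta> > 0" "\<And>s t. 0 \<le> s \<and> s \<le> t \<and> t \<le> T \<and> t - s < \<delta> \<Longrightarrow> \<bar>H t - H s\<bar> \<le> \<epsilon> * (t - s)"
      using key[OF e] by blast
    obtain n :: nat where n: "T / \<delta> < real n" using reals_Archimedean2 by blast
    have n0: "n > 0" using n T0 \<delta>(1) by (metis divide_pos_pos of_nat_0 gr0I less_asym)
    define p where "p k = real k * T / real n" for k :: nat
    have step: "T / real n < \<delta>" using n n0 \<delta>(1) T0 by (simp add: field_simps)
    have "H T - H 0 = (\<Sum>k<n. H (p (Suc k)) - H (p k))"
      by (subst sum_lessThan_telescope) (use n0 in \<open>simp add: p_def\<close>)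
    hence "\<bar>H T - H 0\<bar> \<le> (\<Sum>k<n. \<bar>H (p (Suc k)) - H (p k)\<bar>)"
      by (metis sum_abs)
    also have "\<dots> \<le> (\<Sum>k<n. \<epsilon> * (T / real n))"
    proof (rule sum_mono)
      fix k assume k: "k \<in> {..<n}"
      have d: "p (Suc k) - p k = T / real n" by (simp add: p_def add_divide_distrib algebra_simps)
      have "0 \<le> p k" using T by (simp add: p_def)
      moreover have "p k \<le> p (Suc k)" using d T n0 by (smt (verit) divide_nonneg_nonneg of_nat_0_le_iff)
      moreover have "p (Suc k) \<le> T"
      proof -
        have "real (Suc k) \<le> real n" using k by simp
        hence "real (Suc k) * T \<le> real n * T" using T by (rule mult_right_mono)
        thus ?thesis using n0 by (simp add: p_def field_simps)
      qed
      ultimately show "\<bar>H (p (Suc k)) - H (p k)\<bar> \<le> \<epsilon> * (T / real n)"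
        using \<delta>(2)[of "p k" "p (Suc k)"] d step by simp
    qed
    also have "\<dots> = \<epsilon> * T" using n0 by simp
    finally show ?thesis .
  qed
  have "H T = H 0"
  proof (rule ccontr)
    assume ne: "H T \<noteq> H 0"
    define \<epsilon> where "\<epsilon> = \<bar>H T - H 0\<bar> / (T + 1)"
    have e0: "\<epsilon> > 0" using ne T by (simp add: \<epsilon>_def)
    have "\<epsilon> * T < \<bar>H T - H 0\<bar>" using ne T unfolding \<epsilon>_def by (simp add: field_simps)
    with tel[OF e0] show False by simp
  qed
  hence "integral {0..T} G = \<phi> (\<gamma> T) - \<phi> (\<gamma> 0)" unfolding H_def by simp
  with Gint show ?thesis unfolding G_def by (metis has_integral_integral)
qed



lemma Z2_neg_floor: "(- real_of_int \<lfloor>fst x\<rfloor>, - real_of_int \<lfloor>snd x\<rfloor>) \<in> Z2"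
  unfolding Z2_def by (rule CollectI, rule exI[of _ "- \<lfloor>fst x\<rfloor>"], rule exI[of _ "- \<lfloor>snd x\<rfloor>"]) simp

lemma torus_proj_shift: "torus_proj x = x + (- real_of_int \<lfloor>fst x\<rfloor>, - real_of_int \<lfloor>snd x\<rfloor>)"
  unfolding torus_proj_def by (cases x) (simp add: frac_def)

lemma periodic2_proj: "periodic2 f \<Longrightarrow> f (torus_proj x) = f x"
  unfolding periodic2_def by (metis torus_proj_shift Z2_neg_floor)

lemma torus_proj_cell: "torus_proj x \<in> unit_cell"
  unfolding torus_proj_def unit_cell_def by (simp add: frac_lt_1)

lemma torus_proj_id: "x \<in> unit_cell \<Longrightarrow> torus_proj x = x"
  unfolding torus_proj_def unit_cell_def by (cases x) (simp add: frac_eq)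

lemma unit_cell_sub: "unit_cell \<subseteq> cbox (0,0) (1,1)"
  unfolding unit_cell_def by (auto simp: cbox_Pair_eq)

lemma torus_proj_measurable[measurable]: "torus_proj \<in> borel_measurable borel"
proof -
  have "torus_proj \<in> measurable (borel \<Otimes>\<^sub>M borel) borel"
    unfolding torus_proj_def frac_def by measurable
  thus ?thesis by (simp add: borel_prod)
qed

lemma unit_cell_sets[measurable]: "unit_cell \<in> sets borel"
proof -
  have "{0..<1::real} \<times> {0..<1::real} \<in> sets (borel \<Otimes>\<^sub>M borel)" by (intro pair_measureI) auto
  thus ?thesis unfolding unit_cell_def borel_prod .
qed

lemma periodic_bounded:
  fixes h :: "real \<times> real \<Rightarrow> real"
  assumes "continuous_on UNIV h" "periodic2 h"
  shows "\<exists>M. \<forall>x. \<bar>h x\<bar> \<le> M"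
proof -
  have "compact (h ` cbox (0,0) (1,1))"
    by (rule compact_continuous_image) (auto intro: continuous_on_subset[OF assms(1)])
  then obtain M where M: "\<forall>y\<in>h ` cbox (0,0) (1,1). norm y \<le> M"
    using compact_imp_bounded bounded_iff by metis
  show ?thesis
  proof (intro exI allI)
    fix x
    have "torus_proj x \<in> cbox (0,0) (1,1)" using torus_proj_cell unit_cell_sub by blast
    hence "\<bar>h (torus_proj x)\<bar> \<le> M" using M by auto
    thus "\<bar>h x\<bar> \<le> M" using periodic2_proj[OF assms(2)] by simp
  qed
qed

lemma periodic_deriv:
  fixes \<phi> :: "real \<times> real \<Rightarrow> real"
  assumes per: "periodic2 \<phi>" and diff: "\<And>x. \<phi> differentiable (at x)" and k: "k \<in> Z2"
  shows "frechet_derivative \<phi> (at (x + k)) = frechet_derivative \<phi> (at x)"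
proof -
  have d: "(\<phi> has_derivative frechet_derivative \<phi> (at (x + k))) (at (x + k))"
    using diff frechet_derivative_works by blast
  have s: "((\<lambda>y. y + k) has_derivative id) (at x)"
    by (auto intro!: derivative_eq_intros simp: id_def)
  have "((\<lambda>y. \<phi> (y + k)) has_derivative (\<lambda>v. frechet_derivative \<phi> (at (x + k)) (id v))) (at x)"
    by (rule has_derivative_compose[OF s]) (use d in simp)
  moreover have "(\<lambda>y. \<phi> (y + k)) = \<phi>" using per k unfolding periodic2_def by auto
  ultimately have "(\<phi> has_derivative frechet_derivative \<phi> (at (x + k))) (at x)" by simp
  thus ?thesis by (metis frechet_derivative_at)
qed

definition clampT :: "real \<Rightarrow> real \<Rightarrow> real" where "clampT T t = max 0 (min T t)"

lemma clampT_in: "0 \<le> T \<Longrightarrow> clampT T t \<in> {0..T}" unfolding clampT_def by auto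
lemma clampT_id: "t \<in> {0..T} \<Longrightarrow> clampT T t = t" unfolding clampT_def by auto
lemma continuous_clampT: "continuous_on UNIV (clampT T)"
  unfolding clampT_def by (intro continuous_intros)

lemma space_curve: "\<gamma> \<in> space (curve_space T) \<Longrightarrow> continuous_on {0..T} \<gamma>"
  unfolding curve_space_def by (simp add: space_restrict_space)

lemma eval_meas_single:
  assumes "s \<in> {0..T}"
  shows "(\<lambda>\<gamma>. \<gamma> s) \<in> borel_measurable (curve_space T)"
proof -
  have "(\<lambda>\<gamma>. \<gamma> s) \<in> measurable (PiM {0..T} (\<lambda>_. lborel)) lborel"
    using assms by (rule measurable_component_singleton)
  hence "(\<lambda>\<gamma>. \<gamma> s) \<in> measurable (curve_space T) lborel"
    unfolding curve_space_def by (rule measurable_restrict_space1)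
  thus ?thesis by (simp add: measurable_lborel2)
qed

lemma eval_meas:
  assumes T: "0 \<le> T"
  shows "(\<lambda>p. fst p (clampT T (snd p))) \<in> borel_measurable (curve_space T \<Otimes>\<^sub>M lborel)"
proof (rule borel_measurable_LIMSEQ_metric)
  fix m :: nat
  define q where "q i = clampT T (real_of_int i / real (Suc m))" for i :: int
  have m1: "(\<lambda>p. fst p (q i)) \<in> borel_measurable (curve_space T \<Otimes>\<^sub>M lborel)" if "i \<in> UNIV" for i
    using measurable_compose[OF measurable_fst eval_meas_single[OF clampT_in[OF T]]]
    unfolding q_def by simp
  have m2: "(\<lambda>p. \<lfloor>real (Suc m) * snd p\<rfloor>) \<in> measurable (curve_space T \<Otimes>\<^sub>M lborel) (count_space UNIV)"
    by measurable
  have "(\<lambda>p. (\<lambda>i p. fst p (q i)) (\<lfloor>real (Suc m) * snd p\<rfloor>) p) \<in> borel_measurable (curve_space T \<Otimes>\<^sub>M lborel)"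
    by (rule measurable_compose_countable'[where f="\<lambda>i p. fst p (q i)", OF m1 m2]) auto
  thus "(\<lambda>p. fst p (q \<lfloor>real (Suc m) * snd p\<rfloor>)) \<in> borel_measurable (curve_space T \<Otimes>\<^sub>M lborel)" by simp
next
  fix p :: "(real \<Rightarrow> real \<times> real) \<times> real" assume p: "p \<in> space (curve_space T \<Otimes>\<^sub>M lborel)"
  hence cont: "continuous_on {0..T} (fst p)" by (auto simp: space_pair_measure dest: space_curve)
  define t where "t = snd p"
  define u where "u m = real_of_int \<lfloor>real (Suc m) * t\<rfloor> / real (Suc m)" for m :: nat
  have ub: "t - inverse (real (Suc m)) \<le> u m \<and> u m \<le> t" for m
  proof -
    have "real (Suc m) * t - 1 \<le> real_of_int \<lfloor>real (Suc m) * t\<rfloor>"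
         "real_of_int \<lfloor>real (Suc m) * t\<rfloor> \<le> real (Suc m) * t"
      by linarith+
    moreover have n0: "real (Suc m) > 0" by simp
    ultimately have a: "u m \<le> t" unfolding u_def by (simp add: pos_divide_le_eq mult.commute)
    have "(t - inverse (real (Suc m))) * real (Suc m) = real (Suc m) * t - 1"
      using n0 by (simp add: field_simps)
    hence "t - inverse (real (Suc m)) \<le> u m" unfolding u_def
      using \<open>real (Suc m) * t - 1 \<le> _\<close> n0 by (simp add: pos_le_divide_eq)
    with a show ?thesis by simp
  qed
  have "(\<lambda>m. t - inverse (real (Suc m))) \<longlonglongrightarrow> t - 0"
    by (intro tendsto_intros LIMSEQ_inverse_real_of_nat)
  hence lim1: "(\<lambda>m. t - inverse (real (Suc m))) \<longlonglongrightarrow> t" by simp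
  have ut: "u \<longlonglongrightarrow> t"
  proof (rule tendsto_sandwich[OF _ _ lim1 tendsto_const])
    show "\<forall>\<^sub>F m in sequentially. t - inverse (real (Suc m)) \<le> u m" using ub by simp
    show "\<forall>\<^sub>F m in sequentially. u m \<le> t" using ub by simp
  qed
  have "(\<lambda>m. clampT T (u m)) \<longlonglongrightarrow> clampT T t"
    using continuous_on_tendsto_compose[OF continuous_clampT ut] by simp
  hence "(\<lambda>m. fst p (clampT T (u m))) \<longlonglongrightarrow> fst p (clampT T t)"
  proof (rule continuous_on_tendsto_compose[OF cont])
    show "clampT T t \<in> {0..T}" using clampT_in[OF T] .
    show "\<forall>\<^sub>F m in sequentially. clampT T (u m) \<in> {0..T}" using clampT_in[OF T] by simp
  qed
  thus "(\<lambda>m. fst p (clampT T (real_of_int \<lfloor>real (Suc m) * snd p\<rfloor> / real (Suc m)))) \<longlonglongrightarrow> fst p (clampT T (snd p))"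
    unfolding u_def t_def .
qed



theorem mainTheorem4:
  fixes T :: real
    and b :: "real \<times> real \<Rightarrow> real \<times> real"
    and \<rho> :: "real \<Rightarrow> real \<times> real \<Rightarrow> real"
    and \<eta> :: "(real \<Rightarrow> real \<times> real) measure"
    and c :: "real \<times> real" and r :: real
    and \<rho>B :: "real \<Rightarrow> real \<times> real \<Rightarrow> real"
  assumes T_pos: "T > 0"
    and b_borel: "b \<in> borel_measurable borel"
    and b_bounded: "bounded (range b)"
    and b_periodic: "periodic2 b"
    and b_BV: "torus_BV b"
    and NI: "nearly_incompressible T b \<rho>"
    and eta_sets: "sets \<eta> = sets (curve_space T)"
    and eta_finite: "finite_measure \<eta>"
    and eta_conc: "AE \<gamma> in \<eta>. integral_curve b T \<gamma>"
    and eta_marg: "\<forall>t\<in>{0..T}. distr \<eta> lborel (\<lambda>\<gamma>. torus_proj (\<gamma> t))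
                     = density lborel (\<lambda>x. ennreal (\<rho> t x) * indicator unit_cell x)"
    and c_rat: "fst c \<in> \<rat>" "snd c \<in> \<rat>"
    and r_rat: "r \<in> \<rat>" "r > 0"
    and \<rho>B_meas: "(\<lambda>tx. \<rho>B (fst tx) (snd tx)) \<in> borel_measurable borel"
    and \<rho>B_nonneg: "\<forall>t x. \<rho>B t x \<ge> 0"
    and \<rho>B_def: "\<forall>t\<in>{0..T}.
        distr (density \<eta> (indicator (crossing_set b T (torus_ball c r)))) lborel (\<lambda>\<gamma>. torus_proj (\<gamma> t))
          = density lborel (\<lambda>x. ennreal (\<rho>B t x) * indicator unit_cell x)"
  shows "\<forall>\<phi>::real \<times> real \<Rightarrow> real. smooth \<phi> \<and> periodic2 \<phi> \<and> tsupport \<phi> \<subseteq> torus_ball c r \<longrightarrow>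
           (LINT x:unit_cell|lborel.
              (LINT t:{0..T}|lborel. \<rho>B t (torus_proj x)) * frechet_derivative \<phi> (at x) (b x)) = 0"
proof (intro allI impI)
  fix \<phi> :: "real \<times> real \<Rightarrow> real"
  assume "smooth \<phi> \<and> periodic2 \<phi> \<and> tsupport \<phi> \<subseteq> torus_ball c r"
  hence sm: "smooth \<phi>" and per: "periodic2 \<phi>" and supp: "tsupport \<phi> \<subseteq> torus_ball c r" by auto
  define B where "B = torus_ball c r"
  have T0: "0 \<le> T" using T_pos by simp
  have diff\<phi>: "\<And>x. \<phi> differentiable (at x)"
    using sm unfolding smooth_def by (metis dderiv.simps(1))
  define D1 where "D1 x = frechet_derivative \<phi> (at x) (1,0)" for x
  define D2 where "D2 x = frechet_derivative \<phi> (at x) (0,1)" for x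
  have cD1: "continuous_on UNIV D1"
  proof -
    have "continuous_on UNIV (dderiv [(1,0)] \<phi>)" using sm unfolding smooth_def by blast
    thus ?thesis unfolding D1_def by simp
  qed
  have cD2: "continuous_on UNIV D2"
  proof -
    have "continuous_on UNIV (dderiv [(0,1)] \<phi>)" using sm unfolding smooth_def by blast
    thus ?thesis unfolding D2_def by simp
  qed
  have lin: "frechet_derivative \<phi> (at x) v = fst v * D1 x + snd v * D2 x" for x v
  proof -
    have bl: "bounded_linear (frechet_derivative \<phi> (at x))"
      using diff\<phi> frechet_derivative_works has_derivative_bounded_linear by blast
    have "v = fst v *\<^sub>R (1,0) + snd v *\<^sub>R (0,1)" by (cases v) simp
    hence "frechet_derivative \<phi> (at x) v = frechet_derivative \<phi> (at x) (fst v *\<^sub>R (1,0) + snd v *\<^sub>R (0,1))"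
      by simp
    also have "\<dots> = fst v *\<^sub>R frechet_derivative \<phi> (at x) (1,0) + snd v *\<^sub>R frechet_derivative \<phi> (at x) (0,1)"
      by (simp only: linear_add[OF bounded_linear.linear[OF bl]] linear_scale[OF bounded_linear.linear[OF bl]])
    finally show ?thesis unfolding D1_def D2_def by simp
  qed
  have hasD: "(\<phi> has_derivative (\<lambda>v. fst v * D1 x + snd v * D2 x)) (at x)" for x
  proof -
    have "(\<phi> has_derivative frechet_derivative \<phi> (at x)) (at x)"
      using diff\<phi> frechet_derivative_works by blast
    moreover have "frechet_derivative \<phi> (at x) = (\<lambda>v. fst v * D1 x + snd v * D2 x)"
      by (rule ext) (rule lin)
    ultimately show ?thesis by simp
  qed
  define F where "F x = fst (b x) * D1 x + snd (b x) * D2 x" for x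
  have F_eq: "frechet_derivative \<phi> (at x) (b x) = F x" for x unfolding F_def lin ..
  have perD1: "periodic2 D1" unfolding periodic2_def D1_def
    using periodic_deriv[OF per diff\<phi>] by simp
  have perD2: "periodic2 D2" unfolding periodic2_def D2_def
    using periodic_deriv[OF per diff\<phi>] by simp
  have perF: "periodic2 F" using perD1 perD2 b_periodic unfolding periodic2_def F_def by simp
  obtain M1 where M1: "\<And>x. \<bar>D1 x\<bar> \<le> M1" using periodic_bounded[OF cD1 perD1] by blast
  obtain M2 where M2: "\<And>x. \<bar>D2 x\<bar> \<le> M2" using periodic_bounded[OF cD2 perD2] by blast
  obtain Kb where Kb: "\<And>x. norm (b x) \<le> Kb" using b_bounded unfolding bounded_iff by blast
  define MF where "MF = Kb * M1 + Kb * M2"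
  have Fb: "\<bar>F x\<bar> \<le> MF" for x
  proof -
    have "\<bar>F x\<bar> \<le> \<bar>fst (b x)\<bar> * \<bar>D1 x\<bar> + \<bar>snd (b x)\<bar> * \<bar>D2 x\<bar>"
      unfolding F_def by (metis abs_mult abs_triangle_ineq)
    also have "\<dots> \<le> Kb * M1 + Kb * M2"
      using Kb[of x] abs_fst_le[of "b x"] abs_snd_le[of "b x"] M1[of x] M2[of x]
      by (intro add_mono mult_mono) auto
    finally show ?thesis unfolding MF_def .
  qed
  have MF0: "0 \<le> MF" using Fb[of 0] by linarith
  have bfst: "(\<lambda>x. fst (b x)) \<in> borel_measurable borel"
  proof -
    have "b \<in> measurable borel (borel \<Otimes>\<^sub>M borel)" using b_borel by (simp add: borel_prod)
    thus ?thesis by (rule measurable_compose[OF _ measurable_fst])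
  qed
  have bsnd: "(\<lambda>x. snd (b x)) \<in> borel_measurable borel"
  proof -
    have "b \<in> measurable borel (borel \<Otimes>\<^sub>M borel)" using b_borel by (simp add: borel_prod)
    thus ?thesis by (rule measurable_compose[OF _ measurable_snd])
  qed
  have F_meas[measurable]: "F \<in> borel_measurable borel"
    unfolding F_def using bfst bsnd borel_measurable_continuous_onI[OF cD1] borel_measurable_continuous_onI[OF cD2]
    by measurable
  have F_lmeas[measurable]: "F \<in> borel_measurable lborel" using F_meas by simp
  have Bopen: "open B"
  proof -
    have "B = (\<Union>k\<in>Z2. ball (c + k) r)" unfolding B_def torus_ball_def
      by (rule set_eqI) (simp add: dist_commute)
    thus ?thesis using open_UN[of Z2 "\<lambda>k. ball (c + k) r"] by simp
  qed
  have B_sets[measurable]: "B \<in> sets borel" using Bopen by (rule borel_open)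
  have \<phi>_out: "\<phi> x = 0" if "x \<notin> B" for x
  proof (rule ccontr)
    assume "\<phi> x \<noteq> 0"
    hence "x \<in> closure {x. \<phi> x \<noteq> 0}" using closure_subset[of "{x. \<phi> x \<noteq> 0}"] by auto
    hence "x \<in> B" using supp unfolding tsupport_def B_def by (rule subsetD[rotated])
    thus False using that by simp
  qed
  have sets_prod: "sets (\<eta> \<Otimes>\<^sub>M lborel) = sets (curve_space T \<Otimes>\<^sub>M (lborel::real measure))"
    by (rule sets_pair_measure_cong[OF eta_sets refl])
  have Em[measurable]: "(\<lambda>p. fst p (clampT T (snd p))) \<in> borel_measurable (\<eta> \<Otimes>\<^sub>M lborel)"
    unfolding measurable_cong_sets[OF sets_prod refl] by (rule eval_meas[OF T0])
  have ev: "(\<lambda>\<gamma>. \<gamma> s) \<in> borel_measurable \<eta>" if "s \<in> {0..T}" for s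
    unfolding measurable_cong_sets[OF eta_sets refl] by (rule eval_meas_single[OF that])
  have ev0[measurable]: "(\<lambda>\<gamma>. \<gamma> 0) \<in> borel_measurable \<eta>" using ev T0 by simp
  have evT[measurable]: "(\<lambda>\<gamma>. \<gamma> T) \<in> borel_measurable \<eta>" using ev T0 by simp
  have space_cont: "continuous_on {0..T} \<gamma>" if "\<gamma> \<in> space \<eta>" for \<gamma>
    using space_curve[of \<gamma> T] that sets_eq_imp_space_eq[OF eta_sets] by simp
  have evc: "(\<lambda>t. \<gamma> (clampT T t)) \<in> borel_measurable lborel" if "\<gamma> \<in> space \<eta>" for \<gamma>
    using measurable_Pair2[OF Em that] by simp
  define Gm where "Gm \<gamma> = (\<integral>\<^sup>+ t. ennreal (indicator {0..T} t * indicator B (\<gamma> (clampT T t))) \<partial>lborel)" for \<gamma>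
  have Gm_meas[measurable]: "Gm \<in> borel_measurable \<eta>"
  proof -
    have "(\<lambda>p. ennreal (indicator {0..T} (snd p) * indicator B (fst p (clampT T (snd p))))) \<in> borel_measurable (\<eta> \<Otimes>\<^sub>M lborel)"
      by measurable
    from lborel.borel_measurable_nn_integral_fst[OF this] show ?thesis unfolding Gm_def by simp
  qed
  have Gm_eq: "Gm \<gamma> = emeasure lborel {t \<in> {0..T}. \<gamma> t \<in> B}" if "\<gamma> \<in> space \<eta>" for \<gamma>
  proof -
    let ?A = "{0..T} \<inter> (\<lambda>t. \<gamma> (clampT T t)) -` B"
    have A: "?A \<in> sets lborel"
      using evc[OF that] B_sets by (intro sets.Int) (auto intro: measurable_sets_borel)
    have "Gm \<gamma> = (\<integral>\<^sup>+ t. indicator ?A t \<partial>lborel)" unfolding Gm_def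
      by (intro nn_integral_cong) (auto simp: indicator_def)
    also have "\<dots> = emeasure lborel ?A" using A by simp
    also have "?A = {t \<in> {0..T}. \<gamma> t \<in> B}" by (auto simp: clampT_id)
    finally show ?thesis .
  qed
  define Mset where "Mset = {\<gamma> \<in> space \<eta>. 0 < Gm \<gamma> \<and> \<gamma> 0 \<notin> B \<and> \<gamma> T \<notin> B}"
  have Mset_sets[measurable]: "Mset \<in> sets \<eta>" unfolding Mset_def by measurable
  have dens: "density \<eta> (indicator (crossing_set b T (torus_ball c r))) = density \<eta> (\<lambda>\<gamma>. ennreal (indicator Mset \<gamma>))"
    unfolding density_def
  proof (intro arg_cong[where f="measure_of (space \<eta>) (sets \<eta>)"] ext nn_integral_cong_AE)
    fix A
    show "AE \<gamma> in \<eta>. indicator (crossing_set b T (torus_ball c r)) \<gamma> * indicator A \<gamma> = ennreal (indicator Mset \<gamma>) * indicator A \<gamma>"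
      using eta_conc
    proof (rule AE_mp, intro AE_I2 impI)
      fix \<gamma> assume sp: "\<gamma> \<in> space \<eta>" and ic: "integral_curve b T \<gamma>"
      have "\<gamma> \<in> crossing_set b T (torus_ball c r) \<longleftrightarrow> \<gamma> \<in> Mset"
        unfolding crossing_set_def Gamma_set_def Mset_def using ic sp Gm_eq[OF sp] B_def by auto
      thus "indicator (crossing_set b T (torus_ball c r)) \<gamma> * indicator A \<gamma> = ennreal (indicator Mset \<gamma>) * indicator A \<gamma>"
        by (simp add: indicator_def)
    qed
  qed
  define \<eta>B where "\<eta>B = density \<eta> (\<lambda>\<gamma>. ennreal (indicator Mset \<gamma>))"
  have sets_\<eta>B: "sets \<eta>B = sets \<eta>" unfolding \<eta>B_def by simp
  have ftm: "(\<lambda>\<gamma>. torus_proj (\<gamma> t)) \<in> measurable \<eta>B lborel" if "t \<in> {0..T}" for t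
  proof -
    have "(\<lambda>\<gamma>. torus_proj (\<gamma> t)) \<in> borel_measurable \<eta>"
      using measurable_compose[OF ev[OF that] torus_proj_measurable] .
    thus ?thesis by (simp add: measurable_cong_sets[OF sets_\<eta>B refl])
  qed
  have \<rho>Bt_meas[measurable]: "(\<lambda>x. \<rho>B t x) \<in> borel_measurable borel" for t
  proof -
    have "(\<lambda>x::real\<times>real. (t, x)) \<in> borel_measurable borel" by simp
    from measurable_compose[OF this \<rho>B_meas] show ?thesis by simp
  qed
  have dens2: "density lborel (\<lambda>x. ennreal (\<rho>B t x) * indicator unit_cell x) = density lborel (\<lambda>x. ennreal (\<rho>B t x * indicator unit_cell x))" for t
    by (intro arg_cong[where f="density lborel"] ext) (auto simp: indicator_def)
  have distr_eq: "distr \<eta>B lborel (\<lambda>\<gamma>. torus_proj (\<gamma> t)) = density lborel (\<lambda>x. ennreal (\<rho>B t x * indicator unit_cell x))"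
    if "t \<in> {0..T}" for t
    using \<rho>B_def that dens dens2 unfolding \<eta>B_def B_def by simp
  have stepC: "(\<integral> \<gamma>. indicator Mset \<gamma> * F (\<gamma> t) \<partial>\<eta>) = (\<integral> x. \<rho>B t x * (indicator unit_cell x * F x) \<partial>lborel)"
    if t: "t \<in> {0..T}" for t
  proof -
    have "(\<integral> x. \<rho>B t x * (indicator unit_cell x * F x) \<partial>lborel) = (\<integral> x. (\<rho>B t x * indicator unit_cell x) *\<^sub>R F x \<partial>lborel)"
      by (simp add: mult.assoc mult.left_commute)
    also have "\<dots> = integral\<^sup>L (density lborel (\<lambda>x. ennreal (\<rho>B t x * indicator unit_cell x))) F"
      by (rule integral_density[symmetric]) (auto simp: \<rho>B_nonneg)
    also have "\<dots> = integral\<^sup>L (distr \<eta>B lborel (\<lambda>\<gamma>. torus_proj (\<gamma> t))) F"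
      using distr_eq[OF t] by simp
    also have "\<dots> = (\<integral> \<gamma>. F (torus_proj (\<gamma> t)) \<partial>\<eta>B)"
      by (rule integral_distr[OF ftm[OF t] F_lmeas])
    also have "\<dots> = (\<integral> \<gamma>. indicator Mset \<gamma> *\<^sub>R F (torus_proj (\<gamma> t)) \<partial>\<eta>)"
      unfolding \<eta>B_def
    proof (rule integral_density)
      show "(\<lambda>\<gamma>. F (torus_proj (\<gamma> t))) \<in> borel_measurable \<eta>"
        using measurable_compose[OF ev[OF t] measurable_compose[OF torus_proj_measurable F_meas]] by simp
    qed auto
    also have "\<dots> = (\<integral> \<gamma>. indicator Mset \<gamma> * F (\<gamma> t) \<partial>\<eta>)"
      using periodic2_proj[OF perF] by simp
    finally show ?thesis by simp
  qed
  have eta_fin: "emeasure \<eta> (space \<eta>) < \<infinity>"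
    using eta_finite finite_measure.emeasure_finite[of \<eta> "space \<eta>"] by (simp add: top.not_eq_extremum)
  define E where "E = emeasure \<eta> (space \<eta>)"
  have mass: "(\<integral>\<^sup>+ x. ennreal (\<rho>B t x * indicator unit_cell x) \<partial>lborel) \<le> E" if t: "t \<in> {0..T}" for t
  proof -
    have "(\<integral>\<^sup>+ x. ennreal (\<rho>B t x * indicator unit_cell x) \<partial>lborel)
        = (\<integral>\<^sup>+ x. ennreal (\<rho>B t x * indicator unit_cell x) * indicator UNIV x \<partial>lborel)" by simp
    also have "\<dots> = emeasure (density lborel (\<lambda>x. ennreal (\<rho>B t x * indicator unit_cell x))) UNIV"
      by (rule emeasure_density[symmetric]) auto
    also have "\<dots> = emeasure (distr \<eta>B lborel (\<lambda>\<gamma>. torus_proj (\<gamma> t))) UNIV"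
      using distr_eq[OF t] by simp
    also have "\<dots> = emeasure \<eta>B ((\<lambda>\<gamma>. torus_proj (\<gamma> t)) -` UNIV \<inter> space \<eta>B)"
      by (rule emeasure_distr[OF ftm[OF t]]) simp
    also have "\<dots> = emeasure \<eta>B (space \<eta>)"
      using sets_eq_imp_space_eq[OF sets_\<eta>B] by simp
    also have "\<dots> = (\<integral>\<^sup>+ \<gamma>. ennreal (indicator Mset \<gamma>) * indicator (space \<eta>) \<gamma> \<partial>\<eta>)"
      unfolding \<eta>B_def by (rule emeasure_density) auto
    also have "\<dots> \<le> (\<integral>\<^sup>+ \<gamma>. 1 \<partial>\<eta>)"
      by (intro nn_integral_mono) (auto simp: indicator_def)
    also have "\<dots> = E" unfolding E_def by simp
    finally show ?thesis .
  qed
  define h where "h p = indicator {0..T} (fst p) * (\<rho>B (fst p) (snd p) * (indicator unit_cell (snd p) * F (snd p)))"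
    for p :: "real \<times> (real \<times> real)"
  define k where "k p = indicator {0..T} (fst p) * (\<rho>B (fst p) (snd p) * indicator unit_cell (snd p))"
    for p :: "real \<times> (real \<times> real)"
  have sets_ll: "sets ((lborel::real measure) \<Otimes>\<^sub>M (lborel::(real\<times>real) measure)) = sets (borel \<Otimes>\<^sub>M borel)"
    by (rule sets_pair_measure_cong) simp_all
  have \<rho>Bm2[measurable]: "(\<lambda>p. \<rho>B (fst p) (snd p)) \<in> borel_measurable (borel \<Otimes>\<^sub>M borel)"
    using \<rho>B_meas by (simp add: borel_prod)
  have h_meas[measurable]: "h \<in> borel_measurable (lborel \<Otimes>\<^sub>M lborel)"
    unfolding measurable_cong_sets[OF sets_ll refl] h_def by measurable
  have k_meas[measurable]: "k \<in> borel_measurable (lborel \<Otimes>\<^sub>M lborel)"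
    unfolding measurable_cong_sets[OF sets_ll refl] k_def by measurable
  have k_nonneg: "0 \<le> k p" for p by (simp add: k_def \<rho>B_nonneg)
  have k_nn: "(\<integral>\<^sup>+ p. ennreal (k p) \<partial>(lborel \<Otimes>\<^sub>M lborel)) \<le> E * ennreal T"
  proof -
    have "(\<integral>\<^sup>+ p. ennreal (k p) \<partial>(lborel \<Otimes>\<^sub>M lborel)) = (\<integral>\<^sup>+ t. \<integral>\<^sup>+ x. ennreal (k (t, x)) \<partial>lborel \<partial>lborel)"
      by (rule lborel.nn_integral_fst[symmetric]) measurable
    also have "\<dots> \<le> (\<integral>\<^sup>+ t. E * indicator {0..T} t \<partial>lborel)"
    proof (intro nn_integral_mono)
      fix t :: real
      show "(\<integral>\<^sup>+ x. ennreal (k (t, x)) \<partial>lborel) \<le> E * indicator {0..T} t"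
      proof (cases "t \<in> {0..T}")
        case True
        have "(\<integral>\<^sup>+ x. ennreal (k (t, x)) \<partial>lborel) = (\<integral>\<^sup>+ x. ennreal (\<rho>B t x * indicator unit_cell x) \<partial>lborel)"
          using True by (simp add: k_def)
        also have "\<dots> \<le> E" by (rule mass[OF True])
        finally show ?thesis using True by simp
      next
        case False thus ?thesis by (simp add: k_def)
      qed
    qed
    also have "\<dots> = E * emeasure lborel {0..T}" by (rule nn_integral_cmult_indicator) simp
    also have "\<dots> = E * ennreal T" using T0 by simp
    finally show ?thesis .
  qed
  have E_fin: "E < \<infinity>" using eta_fin unfolding E_def .
  have k_int: "integrable (lborel \<Otimes>\<^sub>M lborel) k"
  proof (rule integrableI_nonneg)
    show "AE p in lborel \<Otimes>\<^sub>M lborel. 0 \<le> k p" using k_nonneg by simp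
    have "E * ennreal T < \<infinity>" using E_fin by (simp add: ennreal_mult_less_top)
    thus "(\<integral>\<^sup>+ p. ennreal (k p) \<partial>(lborel \<Otimes>\<^sub>M lborel)) < \<infinity>" using k_nn by (rule le_less_trans[rotated])
  qed simp
  have h_int: "integrable (lborel \<Otimes>\<^sub>M lborel) h"
  proof (rule Bochner_Integration.integrable_bound[OF integrable_mult_right[OF k_int, of MF] h_meas])
    show "AE p in lborel \<Otimes>\<^sub>M lborel. norm (h p) \<le> norm (MF * k p)"
    proof (rule AE_I2)
      fix p :: "real \<times> (real \<times> real)"
      have "h p = k p * F (snd p)" by (simp add: h_def k_def mult_ac)
      hence "norm (h p) = k p * \<bar>F (snd p)\<bar>" using k_nonneg[of p] by (simp add: abs_mult)
      also have "\<dots> \<le> k p * MF" using Fb k_nonneg[of p] by (intro mult_left_mono) auto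
      also have "\<dots> = norm (MF * k p)" using k_nonneg[of p] MF0 by simp
      finally show "norm (h p) \<le> norm (MF * k p)" .
    qed
  qed
  have fub1: "(\<integral> x. \<integral> t. h (t, x) \<partial>lborel \<partial>lborel) = (\<integral> t. \<integral> x. h (t, x) \<partial>lborel \<partial>lborel)"
    using lborel_pair.Fubini_integral[of "\<lambda>t x. h (t, x)"] h_int by simp
  interpret eta: finite_measure \<eta> by (rule eta_finite)
  interpret P: pair_sigma_finite \<eta> "lborel :: real measure"
    by (intro pair_sigma_finite.intro eta.sigma_finite_measure_axioms lborel.sigma_finite_measure_axioms)
  define k2 where "k2 p = indicator {0..T} (snd p) * (indicator Mset (fst p) * F (fst p (clampT T (snd p))))"
    for p :: "(real \<Rightarrow> real \<times> real) \<times> real"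
  have k2_meas[measurable]: "k2 \<in> borel_measurable (\<eta> \<Otimes>\<^sub>M lborel)" unfolding k2_def by measurable
  have ST_sets: "space \<eta> \<times> {0..T} \<in> sets (\<eta> \<Otimes>\<^sub>M lborel)" by (intro pair_measureI) auto
  have k2_int: "integrable (\<eta> \<Otimes>\<^sub>M lborel) k2"
  proof (rule Bochner_Integration.integrable_bound[OF _ k2_meas])
    have "emeasure (\<eta> \<Otimes>\<^sub>M lborel) (space \<eta> \<times> {0..T}) = E * ennreal T"
      using lborel.emeasure_pair_measure_Times[of "space \<eta>" \<eta> "{0..T}"] T0 unfolding E_def by simp
    also have "\<dots> < \<infinity>" using E_fin by (simp add: ennreal_mult_less_top)
    finally have "emeasure (\<eta> \<Otimes>\<^sub>M lborel) (space \<eta> \<times> {0..T}) < \<infinity>" .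
    thus "integrable (\<eta> \<Otimes>\<^sub>M lborel) (\<lambda>p. MF * indicator (space \<eta> \<times> {0..T}) p)"
      using ST_sets by (intro integrable_mult_right integrable_real_indicator) auto
    show "AE p in \<eta> \<Otimes>\<^sub>M lborel. norm (k2 p) \<le> norm (MF * indicator (space \<eta> \<times> {0..T}) p)"
    proof (rule AE_I2)
      fix p :: "(real \<Rightarrow> real \<times> real) \<times> real" assume "p \<in> space (\<eta> \<Otimes>\<^sub>M lborel)"
      hence "fst p \<in> space \<eta>" by (auto simp: space_pair_measure)
      thus "norm (k2 p) \<le> norm (MF * indicator (space \<eta> \<times> {0..T}) p)"
        using Fb[of "fst p (clampT T (snd p))"] MF0
        by (cases p) (auto simp: k2_def indicator_def)
    qed
  qed
  have fub2: "(\<integral> t. \<integral> \<gamma>. k2 (\<gamma>, t) \<partial>\<eta> \<partial>lborel) = (\<integral> \<gamma>. \<integral> t. k2 (\<gamma>, t) \<partial>lborel \<partial>\<eta>)"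
    using P.Fubini_integral[of "\<lambda>\<gamma> t. k2 (\<gamma>, t)"] k2_int by simp
  have inner0: "AE \<gamma> in \<eta>. (\<integral> t. k2 (\<gamma>, t) \<partial>lborel) = 0"
    using eta_conc
  proof (rule AE_mp, intro AE_I2 impI)
    fix \<gamma> assume sp: "\<gamma> \<in> space \<eta>" and ic: "integral_curve b T \<gamma>"
    show "(\<integral> t. k2 (\<gamma>, t) \<partial>lborel) = 0"
    proof (cases "\<gamma> \<in> Mset")
      case False thus ?thesis by (simp add: k2_def)
    next
      case True
      hence out: "\<gamma> 0 \<notin> B" "\<gamma> T \<notin> B" unfolding Mset_def by auto
      define \<gamma>' where "\<gamma>' \<tau> = \<gamma> (clampT T \<tau>)" for \<tau>
      define f where "f t = F (\<gamma>' t)" for t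
      have fm: "f \<in> borel_measurable lborel"
        unfolding f_def \<gamma>'_def using measurable_compose[OF evc[OF sp] F_meas] .
      have ind_int: "integrable lborel (\<lambda>t. MF * indicator {0..T} t)"
        using T0 by (intro integrable_mult_right integrable_real_indicator) auto
      have fint: "set_integrable lborel {0..T} f"
        unfolding set_integrable_def
      proof (rule Bochner_Integration.integrable_bound[OF ind_int])
        show "(\<lambda>t. indicator {0..T} t *\<^sub>R f t) \<in> borel_measurable lborel" using fm by measurable
        show "AE t in lborel. norm (indicator {0..T} t *\<^sub>R f t) \<le> norm (MF * indicator {0..T} t)"
          using Fb MF0 by (intro AE_I2) (auto simp: indicator_def f_def)
      qed
      have "(\<integral> t. k2 (\<gamma>, t) \<partial>lborel) = (LINT t:{0..T}|lborel. f t)"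
        unfolding set_lebesgue_integral_def k2_def f_def \<gamma>'_def using True by simp
      also have "\<dots> = integral {0..T} f" by (rule set_borel_integral_eq_integral(2)[OF fint])
      also have "\<dots> = \<phi> (\<gamma>' T) - \<phi> (\<gamma>' 0)"
      proof (rule integral_unique)
        have curve: "((\<lambda>\<tau>. b (\<gamma>' \<tau>)) has_integral (\<gamma>' t - \<gamma>' 0)) {0..t}" if t: "t \<in> {0..T}" for t
        proof -
          have "((\<lambda>\<tau>. b (\<gamma> \<tau>)) has_integral (\<gamma> t - \<gamma> 0)) {0..t}"
            using ic t unfolding integral_curve_def by blast
          moreover have "\<gamma>' t = \<gamma> t" "\<gamma>' 0 = \<gamma> 0" using t T0 by (simp_all add: \<gamma>'_def clampT_id)
          moreover have "((\<lambda>\<tau>. b (\<gamma>' \<tau>)) has_integral (\<gamma> t - \<gamma> 0)) {0..t} = ((\<lambda>\<tau>. b (\<gamma> \<tau>)) has_integral (\<gamma> t - \<gamma> 0)) {0..t}"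
            using t by (intro has_integral_cong) (simp add: \<gamma>'_def clampT_id)
          ultimately show ?thesis by simp
        qed
        have integ: "(\<lambda>\<tau>. fst (b (\<gamma>' \<tau>)) * D1 (\<gamma>' \<tau>) + snd (b (\<gamma>' \<tau>)) * D2 (\<gamma>' \<tau>)) integrable_on {0..T}"
          using set_borel_integral_eq_integral(1)[OF fint] unfolding f_def F_def .
        show "(f has_integral \<phi> (\<gamma>' T) - \<phi> (\<gamma>' 0)) {0..T}"
          using chain_rule_curve[OF hasD cD1 cD2 curve Kb integ T0] unfolding f_def F_def .
      qed
      also have "\<dots> = 0" using out \<phi>_out T0 by (simp add: \<gamma>'_def clampT_id)
      finally show ?thesis .
    qed
  qed
  have "(LINT x:unit_cell|lborel. (LINT t:{0..T}|lborel. \<rho>B t (torus_proj x)) * frechet_derivative \<phi> (at x) (b x))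
      = (\<integral> x. \<integral> t. h (t, x) \<partial>lborel \<partial>lborel)"
    unfolding set_lebesgue_integral_def
  proof (rule Bochner_Integration.integral_cong[OF refl])
    fix x :: "real \<times> real"
    show "indicator unit_cell x *\<^sub>R ((\<integral> t. indicator {0..T} t *\<^sub>R \<rho>B t (torus_proj x) \<partial>lborel) * frechet_derivative \<phi> (at x) (b x))
        = (\<integral> t. h (t, x) \<partial>lborel)"
    proof (cases "x \<in> unit_cell")
      case True
      have "(\<integral> t. h (t, x) \<partial>lborel) = (\<integral> t. (indicator {0..T} t * \<rho>B t x) * F x \<partial>lborel)"
        by (rule Bochner_Integration.integral_cong[OF refl]) (simp add: h_def True)
      also have "\<dots> = (\<integral> t. indicator {0..T} t * \<rho>B t x \<partial>lborel) * F x" by (rule integral_mult_left_zero)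
      finally show ?thesis using True torus_proj_id[OF True] F_eq by simp
    next
      case False thus ?thesis by (simp add: h_def)
    qed
  qed
  also note fub1
  also have "(\<integral> t. \<integral> x. h (t, x) \<partial>lborel \<partial>lborel) = (\<integral> t. \<integral> \<gamma>. k2 (\<gamma>, t) \<partial>\<eta> \<partial>lborel)"
  proof (rule Bochner_Integration.integral_cong[OF refl])
    fix t :: real
    show "(\<integral> x. h (t, x) \<partial>lborel) = (\<integral> \<gamma>. k2 (\<gamma>, t) \<partial>\<eta>)"
    proof (cases "t \<in> {0..T}")
      case False thus ?thesis by (simp add: h_def k2_def)
    next
      case True
      have "(\<integral> x. h (t, x) \<partial>lborel) = (\<integral> x. \<rho>B t x * (indicator unit_cell x * F x) \<partial>lborel)"
        using True by (simp add: h_def indicator_def)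
      also have "\<dots> = (\<integral> \<gamma>. indicator Mset \<gamma> * F (\<gamma> t) \<partial>\<eta>)" by (rule stepC[OF True, symmetric])
      also have "\<dots> = (\<integral> \<gamma>. k2 (\<gamma>, t) \<partial>\<eta>)"
        by (rule Bochner_Integration.integral_cong[OF refl]) (use True in \<open>simp add: k2_def clampT_id indicator_def\<close>)
      finally show ?thesis .
    qed
  qed
  also note fub2
  also have "(\<integral> \<gamma>. \<integral> t. k2 (\<gamma>, t) \<partial>lborel \<partial>\<eta>) = 0" by (rule integral_eq_zero_AE[OF inner0])
  finally show "(LINT x:unit_cell|lborel. (LINT t:{0..T}|lborel. \<rho>B t (torus_proj x)) * frechet_derivative \<phi> (at x) (b x)) = 0" .
qed

end
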